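(* Under the assumptions and notation of the context, for every $t\in[0,T]$, $$\lim_{k\to\infty}h_k(t,X_t)=\mathfrak h(t,X_t)\quad\mathbb P\text{-a.s.},$$ and $$\frac{\mathbf 1_{\{X_0\in A_k\}}}{r_k}\frac{h_k(t,X_t)}{h_k(0,X_0)}\xrightarrow[k\to\infty]{}\frac{\mathfrak h(t,X_t)}{\mathfrak h(0,X_0)}\quad\text{in }L^1(\mathbb P).$$
   Context: Standing SBP assumptions: $\mathbb R$ strong Markov path measure on $D([0,T];\mathbb R^n)$ with transitions $P_{s,t}$; $\rho_0\ll\mathbb R_0$, $\rho_T\ll\mathbb R_T$; Schrödinger bridge $\hat{\mathbb P}=\mathfrak f(X_0)\mathfrak g(X_T)\mathbb R$ with $\mathfrak f,\mathfrak g\ge0$ measurable solving $\mathfrak f(x)\int\mathfrak g(y)P_{0,T}(x,dy)=\frac{d\rho_0}{d\mathbb R_0}(x)$ ($\mathbb R_0$-a.e.), $\mathfrak g(y)\mathbb E_{\mathbb R}[\mathfrak f(X_0)|X_T=y]=\frac{d\rho_T}{d\mathbb R_T}(y)$ ($\mathbb R_T$-a.e.). $S_0=\{d\rho_0/d\mathbb R_0=0\}$, $\mathbb P:=\mathbf 1_{S_0^c}(X_0)\frac{d\rho_0}{d\mathbb R_0}(X_0)\mathbb R$, $\mathfrak h(t,x)=\int\mathfrak g(y)P_{t,T}(x,dy)$. Assumption (A3) holds: for each $g\in C_c^\infty$, $\int g(y)P_{t,T}(x,dy)$ is of class $C^{1,2}$ on $[0,T]\times\mathbb R^n$ and solves $(\partial_t+L)h=0$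 on $(0,T)\times\mathbb R^n$, $L$ being the jump-diffusion generator of $\mathbb R$. Construction: simple $g'_k\uparrow\mathfrak g$ with values in $[0,k]$; $g''_k\in C_b$, $g''_k\ge0$, $\mathbb R_T(g'_k\ne g''_k)\le k^{-3}$; compact $D_k$ with $\mathbb R_T(D_k^c)\le k^{-3}$; $g_k\in C_c^\infty$, $0\le g_k\le k$, $\sup_{D_k}|g_k-g''_k|\le k^{-2}$. $h_k(t,x)=\int g_k(y)P_{t,T}(x,dy)$, $A_k=\{h_k(0,\cdot)>0\}$, $r_k=\rho_0(A_k)$. *)

theory Defs
  imports "HOL-Probability.Probability"
begin

text \<open>Cadlag paths on [0,T]; outside [0,T] a path is normalised to 0 so that
  D([0,T];R^n) is represented faithfully as a set of total functions.\<close>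

definition cadlag_on :: "real \<Rightarrow> (real \<Rightarrow> 'a::metric_space) \<Rightarrow> bool" where
  "cadlag_on T \<omega> \<longleftrightarrow>
     (\<forall>t\<in>{0..<T}. (\<omega> \<longlongrightarrow> \<omega> t) (at_right t)) \<and>
     (\<forall>t\<in>{0<..T}. \<exists>l. (\<omega> \<longlongrightarrow> l) (at_left t))"

definition Dpaths :: "real \<Rightarrow> (real \<Rightarrow> real^'n) set" where
  "Dpaths T = {\<omega>. cadlag_on T \<omega> \<and> (\<forall>t. t \<notin> {0..T} \<longrightarrow> \<omega> t = 0)}"

definition path_space :: "real \<Rightarrow> (real \<Rightarrow> real^'n) measure" where
  "path_space T = sigma (Dpaths T)
     {{\<omega>\<in>Dpaths T. \<omega> t \<in> B} | t B. t \<in> {0..T} \<and> B \<in> sets (borel :: (real^'n) measure)}"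

definition nat_filt :: "(real \<Rightarrow> real^'n) measure \<Rightarrow> real \<Rightarrow> (real \<Rightarrow> real^'n) measure" where
  "nat_filt R t = sigma (space R)
     {{\<omega>\<in>space R. \<omega> s \<in> B} | s B. s \<in> {0..t} \<and> B \<in> sets (borel :: (real^'n) measure)}"

text \<open>R is strong Markov with transitions P: each P s t is a Markov (probability) kernel,
  jointly measurable in (s,x), and for every stopping time tau (natural filtration) with
  values in [0,T], every t in [0,T], every A in F_tau and every nonnegative Borel f,
  E_R[1_{A, tau<=t} f(X_t)] = E_R[1_{A, tau<=t} P_{tau,t} f (X_tau)].
  (R may be an unbounded positive measure, hence the nonnegative integrals.)\<close>

definition strong_markov_transitions ::
  "(real \<Rightarrow> real^'n) measure \<Rightarrow> real \<Rightarrow> (real \<Rightarrow> real \<Rightarrow> real^'n \<Rightarrow> (real^'n) measure) \<Rightarrow> bool" where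
  "strong_markov_transitions R T P \<longleftrightarrow>
     (\<forall>s t. 0 \<le> s \<longrightarrow> s \<le> t \<longrightarrow> t \<le> T \<longrightarrow> P s t \<in> borel \<rightarrow>\<^sub>M prob_algebra borel) \<and>
     (\<forall>t\<in>{0..T}. (\<lambda>(s, x). P s t x)
          \<in> restrict_space (borel \<Otimes>\<^sub>M borel) ({0..t} \<times> UNIV) \<rightarrow>\<^sub>M prob_algebra borel) \<and>
     (\<forall>(\<tau> :: (real \<Rightarrow> real^'n) \<Rightarrow> real) t A (f :: real^'n \<Rightarrow> ennreal).
        stopping_time (nat_filt R) \<tau> \<longrightarrow> (\<forall>\<omega>\<in>space R. \<tau> \<omega> \<in> {0..T}) \<longrightarrow>
        t \<in> {0..T} \<longrightarrow> A \<in> sets (filtration.pre_sigma (space R) (nat_filt R) \<tau>) \<longrightarrow>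
        f \<in> borel_measurable borel \<longrightarrow>
        (\<integral>\<^sup>+\<omega>. indicator {\<omega>\<in>A. \<tau> \<omega> \<le> t} \<omega> * f (\<omega> t) \<partial>R) =
        (\<integral>\<^sup>+\<omega>. indicator {\<omega>\<in>A. \<tau> \<omega> \<le> t} \<omega> * (\<integral>\<^sup>+y. f y \<partial>(P (\<tau> \<omega>) t (\<omega> (\<tau> \<omega>)))) \<partial>R))"

text \<open>E_R[F | X_T = y] for nonnegative F: the Radon-Nikodym derivative of the X_T-image of
  F.R with respect to R_T.\<close>

definition cond_exp_given_X :: "(real \<Rightarrow> real^'n) measure \<Rightarrow> ((real \<Rightarrow> real^'n) \<Rightarrow> ennreal)
     \<Rightarrow> real \<Rightarrow> real^'n \<Rightarrow> ennreal" where
  "cond_exp_given_X R F t y =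
     RN_deriv (distr R borel (\<lambda>\<omega>. \<omega> t)) (distr (density R F) borel (\<lambda>\<omega>. \<omega> t)) y"

fun pderivs :: "'n list \<Rightarrow> (real^'n \<Rightarrow> real) \<Rightarrow> (real^'n \<Rightarrow> real)" where
  "pderivs [] f = f"
| "pderivs (i # is) f = (\<lambda>x. deriv (\<lambda>s. pderivs is f (x + s *\<^sub>R axis i 1)) 0)"

definition smooth_fun :: "(real^'n \<Rightarrow> real) \<Rightarrow> bool" where
  "smooth_fun f \<longleftrightarrow>
     (\<forall>is. continuous_on UNIV (pderivs is f) \<and>
        (\<forall>i x. (\<lambda>s. pderivs is f (x + s *\<^sub>R axis i 1)) differentiable (at 0)))"

definition compact_support :: "(real^'n \<Rightarrow> real) \<Rightarrow> bool" where
  "compact_support f \<longleftrightarrow> compact (closure {x. f x \<noteq> 0})"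

definition C12_backward_eq ::
  "real \<Rightarrow> (real \<Rightarrow> real^'n \<Rightarrow> real^'n) \<Rightarrow> (real \<Rightarrow> real^'n \<Rightarrow> real^'n^'n)
   \<Rightarrow> (real \<Rightarrow> real^'n \<Rightarrow> (real^'n) measure) \<Rightarrow> (real \<Rightarrow> real^'n \<Rightarrow> real) \<Rightarrow> bool" where
  "C12_backward_eq T b a J h \<longleftrightarrow>
     (\<exists>ht hx hxx.
        continuous_on ({0..T} \<times> UNIV) (\<lambda>(t, x). h t x) \<and>
        continuous_on ({0..T} \<times> UNIV) (\<lambda>(t, x). ht t x) \<and>
        continuous_on ({0..T} \<times> UNIV) (\<lambda>(t, x). hx t x) \<and>
        continuous_on ({0..T} \<times> UNIV) (\<lambda>(t, x). hxx t x) \<and>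
        (\<forall>t\<in>{0..T}. \<forall>x.
           ((\<lambda>s. h s x) has_real_derivative ht t x) (at t within {0..T}) \<and>
           (h t has_derivative (\<lambda>v. hx t x \<bullet> v)) (at x) \<and>
           (hx t has_derivative (\<lambda>v. hxx t x *v v)) (at x)) \<and>
        (\<forall>t\<in>{0<..<T}. \<forall>x.
           ht t x + b t x \<bullet> hx t x
           + (1/2) * (\<Sum>i\<in>UNIV. \<Sum>j\<in>UNIV. a t x $ i $ j * hxx t x $ i $ j)
           + (\<integral>z. h t (x + z) - h t x - (if norm z \<le> 1 then hx t x \<bullet> z else 0) \<partial>(J t x))
           = 0))"

end

theory Submission
  imports Defs
begin


lemma space_path_space: "space (path_space T) = Dpaths T"
  unfolding path_space_def by (rule space_measure_of) auto

lemma sets_path_space: "sets (path_space T) = sigma_sets (Dpaths T)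
     {{\<omega>\<in>Dpaths T. \<omega> t \<in> B} | t B. t \<in> {0..T} \<and> B \<in> sets (borel :: (real^'n) measure)}"
  unfolding path_space_def by (rule sets_measure_of) auto

lemma X_meas:
  assumes "sets R = sets (path_space T)" "t \<in> {0..T}"
  shows "(\<lambda>\<omega>::real\<Rightarrow>real^'n. \<omega> t) \<in> R \<rightarrow>\<^sub>M borel"
proof -
  have sp: "space R = Dpaths T" using sets_eq_imp_space_eq[OF assms(1)] space_path_space by metis
  show ?thesis
  proof (rule measurableI)
    fix A :: "(real^'n) set" assume A: "A \<in> sets borel"
    have "(\<lambda>\<omega>. \<omega> t) -` A \<inter> space R = {\<omega>\<in>Dpaths T. \<omega> t \<in> A}" using sp by auto
    also have "\<dots> \<in> sets R" unfolding assms(1) sets_path_space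
      by (rule sigma_sets.Basic) (use A assms(2) in blast)
    finally show "(\<lambda>\<omega>. \<omega> t) -` A \<inter> space R \<in> sets R" .
  qed auto
qed

lemma nat_filt_filtration: "filtration (space R) (nat_filt R)"
proof
  fix i show "space (nat_filt R i) = space R" unfolding nat_filt_def by (rule space_measure_of) auto
next
  fix i j :: real assume "i \<le> j"
  then show "sets (nat_filt R i) \<subseteq> sets (nat_filt R j)"
    unfolding nat_filt_def
    apply (subst (1 2) sets_measure_of)
    apply auto[2]
    apply (rule sigma_sets_mono')
    apply auto
    apply (rule_tac x=s in exI, rule_tac x=B in exI)
    apply auto
    done
qed

lemma sets_nat_filt: "sets (nat_filt R u) = sigma_sets (space R)
     {{\<omega>\<in>space R. \<omega> s \<in> B} | s B. s \<in> {0..u} \<and> B \<in> sets (borel :: (real^'n) measure)}"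
  unfolding nat_filt_def by (rule sets_measure_of) auto

lemma markov_ind:
  fixes R :: "(real \<Rightarrow> real^'n) measure"
  assumes SM: "strong_markov_transitions R T P"
    and st: "0 \<le> s" "s \<le> t" "t \<le> T" and B: "B \<in> sets borel"
    and f: "f \<in> borel_measurable (borel :: (real^'n) measure)"
  shows "(\<integral>\<^sup>+\<omega>. indicator {\<omega>\<in>space R. \<omega> s \<in> B} \<omega> * f (\<omega> T) \<partial>R) =
         (\<integral>\<^sup>+\<omega>. indicator {\<omega>\<in>space R. \<omega> s \<in> B} \<omega> * (\<integral>\<^sup>+y. f y \<partial>(P t T (\<omega> t))) \<partial>R)"
proof -
  let ?A = "{\<omega>\<in>space R. \<omega> s \<in> B}"
  have A: "?A \<in> sets (filtration.pre_sigma (space R) (nat_filt R) (\<lambda>_. t))"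
  proof (rule filtration.sets_pre_sigmaI[OF nat_filt_filtration stopping_time_const])
    fix u :: real
    show "{\<omega> \<in> ?A. t \<le> u} \<in> sets (nat_filt R u)"
    proof (cases "t \<le> u")
      case True
      then have "{\<omega> \<in> ?A. t \<le> u} = ?A" by auto
      also have "\<dots> \<in> sets (nat_filt R u)" unfolding sets_nat_filt
        by (rule sigma_sets.Basic) (use True st B in force)
      finally show ?thesis .
    qed simp
  qed
  have "stopping_time (nat_filt R) (\<lambda>_. t)" by (rule stopping_time_const)
  moreover have "\<forall>\<omega>\<in>space R. (\<lambda>_. t) \<omega> \<in> {0..T}" using st by auto
  moreover have "T \<in> {0..T}" using st by auto
  ultimately have "(\<integral>\<^sup>+\<omega>. indicator {\<omega>\<in>?A. (\<lambda>_. t) \<omega> \<le> T} \<omega> * f (\<omega> T) \<partial>R) =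
        (\<integral>\<^sup>+\<omega>. indicator {\<omega>\<in>?A. (\<lambda>_. t) \<omega> \<le> T} \<omega> * (\<integral>\<^sup>+y. f y \<partial>(P ((\<lambda>_. t) \<omega>) T (\<omega> ((\<lambda>_. t) \<omega>)))) \<partial>R)"
    using SM A f unfolding strong_markov_transitions_def by blast
  then show ?thesis using st by simp
qed

lemma kernel_meas:
  assumes SM: "strong_markov_transitions R T P" and st: "0 \<le> s" "s \<le> t" "t \<le> T"
  shows "P s t \<in> borel \<rightarrow>\<^sub>M prob_algebra borel"
  using SM st unfolding strong_markov_transitions_def by blast

lemma kernel_prob:
  assumes "K \<in> borel \<rightarrow>\<^sub>M prob_algebra borel"
  shows "prob_space (K x)" "sets (K x) = sets borel"
  using measurable_space[OF assms, of x] by (auto simp: space_prob_algebra)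

lemma kernel_nn_meas:
  assumes "K \<in> (borel :: 'a::topological_space measure) \<rightarrow>\<^sub>M prob_algebra (borel :: 'b::topological_space measure)"
    and "f \<in> borel_measurable (borel :: 'b measure)"
  shows "(\<lambda>x. \<integral>\<^sup>+y. f y \<partial>K x) \<in> borel_measurable borel"
proof -
  have "(\<lambda>M. integral\<^sup>N M f) \<in> borel_measurable (subprob_algebra borel)"
    by (rule nn_integral_measurable_subprob_algebra) fact
  then show ?thesis
    using measurable_comp[OF measurable_prob_algebraD[OF assms(1)]] by (simp add: comp_def)
qed

lemma kernel_int_meas:
  fixes f :: "real^'n \<Rightarrow> real"
  assumes "K \<in> (borel :: (real^'n) measure) \<rightarrow>\<^sub>M prob_algebra (borel :: (real^'n) measure)"
    and "f \<in> borel_measurable borel"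
  shows "(\<lambda>x. \<integral>y. f y \<partial>K x) \<in> borel_measurable borel"
proof -
  have "(\<lambda>M. integral\<^sup>L M f) \<in> borel_measurable (subprob_algebra borel)"
    by (rule integral_measurable_subprob_algebra) fact
  then show ?thesis
    using measurable_comp[OF measurable_prob_algebraD[OF assms(1)]] by (simp add: comp_def)
qed

lemma markov_gen:
  fixes R :: "(real \<Rightarrow> real^'n) measure"
  assumes RS: "sets R = sets (path_space T)" and SM: "strong_markov_transitions R T P"
    and st: "0 \<le> s" "s \<le> t" "t \<le> T"
    and f: "f \<in> borel_measurable (borel :: (real^'n) measure)"
    and phi: "\<phi> \<in> borel_measurable (borel :: (real^'n) measure)"
  shows "(\<integral>\<^sup>+\<omega>. \<phi> (\<omega> s) * f (\<omega> T) \<partial>R) =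
         (\<integral>\<^sup>+\<omega>. \<phi> (\<omega> s) * (\<integral>\<^sup>+y. f y \<partial>(P t T (\<omega> t))) \<partial>R)"
proof -
  have Xs[measurable]: "(\<lambda>\<omega>::real\<Rightarrow>real^'n. \<omega> s) \<in> R \<rightarrow>\<^sub>M borel" using X_meas[OF RS] st by auto
  have Xt[measurable]: "(\<lambda>\<omega>::real\<Rightarrow>real^'n. \<omega> t) \<in> R \<rightarrow>\<^sub>M borel" using X_meas[OF RS] st by auto
  have XT[measurable]: "(\<lambda>\<omega>::real\<Rightarrow>real^'n. \<omega> T) \<in> R \<rightarrow>\<^sub>M borel" using X_meas[OF RS] st by auto
  define F where "F = (\<lambda>x. \<integral>\<^sup>+y. f y \<partial>(P t T x))"
  have F[measurable]: "F \<in> borel_measurable borel" unfolding F_def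
    by (rule kernel_nn_meas[OF kernel_meas[OF SM] f]) (use st in auto)
  have [measurable]: "f \<in> borel_measurable borel" by fact
  have [measurable]: "\<phi> \<in> borel_measurable borel" by fact
  have eq: "distr (density R (\<lambda>\<omega>. f (\<omega> T))) borel (\<lambda>\<omega>. \<omega> s) =
            distr (density R (\<lambda>\<omega>. F (\<omega> t))) borel (\<lambda>\<omega>. \<omega> s)"
  proof (rule measure_eqI)
    fix B :: "(real^'n) set" assume B: "B \<in> sets (distr (density R (\<lambda>\<omega>. f (\<omega> T))) borel (\<lambda>\<omega>. \<omega> s))"
    then have B[measurable]: "B \<in> sets borel" by simp
    have 1: "{\<omega> \<in> space R. \<omega> s \<in> B} \<in> sets R" by measurable
    have "emeasure (distr (density R (\<lambda>\<omega>. f (\<omega> T))) borel (\<lambda>\<omega>. \<omega> s)) B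
          = (\<integral>\<^sup>+\<omega>. indicator {\<omega>\<in>space R. \<omega> s \<in> B} \<omega> * f (\<omega> T) \<partial>R)"
      by (subst emeasure_distr) (auto simp: emeasure_density 1 mult.commute indicator_def intro!: nn_integral_cong)
    also have "\<dots> = (\<integral>\<^sup>+\<omega>. indicator {\<omega>\<in>space R. \<omega> s \<in> B} \<omega> * F (\<omega> t) \<partial>R)"
      unfolding F_def by (rule markov_ind[OF SM st B f])
    also have "\<dots> = emeasure (distr (density R (\<lambda>\<omega>. F (\<omega> t))) borel (\<lambda>\<omega>. \<omega> s)) B"
      by (subst emeasure_distr) (auto simp: emeasure_density 1 mult.commute indicator_def intro!: nn_integral_cong)
    finally show "emeasure (distr (density R (\<lambda>\<omega>. f (\<omega> T))) borel (\<lambda>\<omega>. \<omega> s)) B =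
        emeasure (distr (density R (\<lambda>\<omega>. F (\<omega> t))) borel (\<lambda>\<omega>. \<omega> s)) B" .
  qed simp
  have "(\<integral>\<^sup>+\<omega>. \<phi> (\<omega> s) * f (\<omega> T) \<partial>R) = integral\<^sup>N (distr (density R (\<lambda>\<omega>. f (\<omega> T))) borel (\<lambda>\<omega>. \<omega> s)) \<phi>"
    by (subst nn_integral_distr) (auto simp: nn_integral_density mult.commute)
  also have "\<dots> = integral\<^sup>N (distr (density R (\<lambda>\<omega>. F (\<omega> t))) borel (\<lambda>\<omega>. \<omega> s)) \<phi>" by (simp only: eq)
  also have "\<dots> = (\<integral>\<^sup>+\<omega>. \<phi> (\<omega> s) * F (\<omega> t) \<partial>R)"
    by (subst nn_integral_distr) (auto simp: nn_integral_density mult.commute)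
  finally show ?thesis unfolding F_def .
qed

lemma markov_emeasure:
  fixes R :: "(real \<Rightarrow> real^'n) measure"
  assumes RS: "sets R = sets (path_space T)" and SM: "strong_markov_transitions R T P"
    and t: "0 \<le> t" "t \<le> T" and E: "E \<in> sets (borel :: (real^'n) measure)"
  shows "(\<integral>\<^sup>+x. emeasure (P t T x) E \<partial>distr R borel (\<lambda>\<omega>. \<omega> t)) = emeasure (distr R borel (\<lambda>\<omega>. \<omega> T)) E"
proof -
  have Xt[measurable]: "(\<lambda>\<omega>::real\<Rightarrow>real^'n. \<omega> t) \<in> R \<rightarrow>\<^sub>M borel" using X_meas[OF RS] t by auto
  have XT[measurable]: "(\<lambda>\<omega>::real\<Rightarrow>real^'n. \<omega> T) \<in> R \<rightarrow>\<^sub>M borel" using X_meas[OF RS] t by auto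
  have K: "P t T \<in> borel \<rightarrow>\<^sub>M prob_algebra borel" by (rule kernel_meas[OF SM]) (use t in auto)
  have F[measurable]: "(\<lambda>x. \<integral>\<^sup>+y. indicator E y \<partial>(P t T x)) \<in> borel_measurable borel"
    by (rule kernel_nn_meas[OF K]) (use E in auto)
  have "(\<integral>\<^sup>+\<omega>. (\<lambda>_. 1) (\<omega> t) * indicator E (\<omega> T) \<partial>R) =
         (\<integral>\<^sup>+\<omega>. (\<lambda>_. 1) (\<omega> t) * (\<integral>\<^sup>+y. indicator E y \<partial>(P t T (\<omega> t))) \<partial>R)"
    by (rule markov_gen[OF RS SM]) (use t E in auto)
  then have eq: "(\<integral>\<^sup>+\<omega>. indicator E (\<omega> T) \<partial>R) = (\<integral>\<^sup>+\<omega>. (\<integral>\<^sup>+y. indicator E y \<partial>(P t T (\<omega> t))) \<partial>R)"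
    by simp
  have "emeasure (distr R borel (\<lambda>\<omega>. \<omega> T)) E = (\<integral>\<^sup>+y. indicator E y \<partial>distr R borel (\<lambda>\<omega>. \<omega> T))"
    using E by simp
  also have "\<dots> = (\<integral>\<^sup>+\<omega>. indicator E (\<omega> T) \<partial>R)" using E by (subst nn_integral_distr) auto
  also have "\<dots> = (\<integral>\<^sup>+\<omega>. (\<integral>\<^sup>+y. indicator E y \<partial>(P t T (\<omega> t))) \<partial>R)" by (rule eq)
  also have "\<dots> = (\<integral>\<^sup>+x. (\<integral>\<^sup>+y. indicator E y \<partial>(P t T x)) \<partial>distr R borel (\<lambda>\<omega>. \<omega> t))"
    by (subst nn_integral_distr) auto
  also have "\<dots> = (\<integral>\<^sup>+x. emeasure (P t T x) E \<partial>distr R borel (\<lambda>\<omega>. \<omega> t))"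
    using E kernel_prob(2)[OF K] by (intro nn_integral_cong) (simp add: nn_integral_indicator)
  finally show ?thesis ..
qed


lemma conv_pointwise:
  fixes Q :: "(real^'n) measure" and g' g'' g :: "nat \<Rightarrow> real^'n \<Rightarrow> real" and gg :: "real^'n \<Rightarrow> real"
  assumes Q: "prob_space Q" "sets Q = sets borel"
    and g'_meas: "\<And>k. k \<ge> 1 \<Longrightarrow> g' k \<in> borel_measurable borel"
    and g'_range: "\<forall>k\<ge>1. \<forall>y. g' k y \<in> {0..real k}"
    and g'_mono: "\<forall>k\<ge>1. \<forall>y. g' k y \<le> g' (Suc k) y"
    and g'_lim: "\<forall>y. (\<lambda>k. g' k y) \<longlonglongrightarrow> gg y"
    and g_meas: "\<And>k. k \<ge> 1 \<Longrightarrow> g k \<in> borel_measurable borel"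
    and g_range: "\<forall>k\<ge>1. \<forall>y. 0 \<le> g k y \<and> g k y \<le> real k"
    and g_close: "\<forall>k\<ge>1. \<forall>y\<in>D k. \<bar>g k y - g'' k y\<bar> \<le> 1 / real k ^ 2"
    and E_meas: "\<And>k. k \<ge> 1 \<Longrightarrow> {y. g' k y \<noteq> g'' k y} \<union> - D k \<in> sets borel"
    and tail: "(\<lambda>k. real (Suc k) * measure Q ({y. g' (Suc k) y \<noteq> g'' (Suc k) y} \<union> - D (Suc k))) \<longlonglongrightarrow> 0"
  shows "(\<lambda>k. ennreal (\<integral>y. g k y \<partial>Q)) \<longlonglongrightarrow> (\<integral>\<^sup>+y. ennreal (gg y) \<partial>Q)"
proof -
  interpret Q: prob_space Q by fact
  define E where "E k = {y. g' k y \<noteq> g'' k y} \<union> - D k" for k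
  define a where "a k = (\<integral>y. g' (Suc k) y \<partial>Q)" for k
  define b where "b k = (\<integral>y. g (Suc k) y \<partial>Q)" for k
  define e where "e k = 1 / real (Suc k) ^ 2 + real (Suc k) * measure Q (E (Suc k))" for k
  have mQ: "f \<in> borel_measurable Q" if "f \<in> borel_measurable borel" for f :: "real^'n \<Rightarrow> real"
    using that measurable_cong_sets[OF Q(2) refl] by blast
  have g'Q: "g' (Suc k) \<in> borel_measurable Q" for k by (rule mQ, rule g'_meas) simp
  have gQ: "g (Suc k) \<in> borel_measurable Q" for k by (rule mQ, rule g_meas) simp
  have EQ: "E (Suc k) \<in> sets Q" for k unfolding E_def Q(2) by (rule E_meas) simp
  have int_g': "integrable Q (g' (Suc k))" for k
    by (rule Q.integrable_const_bound[where B="real (Suc k)"]) (use g'Q g'_range in \<open>auto simp del: of_nat_Suc\<close>)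
  have int_g: "integrable Q (g (Suc k))" for k
    by (rule Q.integrable_const_bound[where B="real (Suc k)"]) (use g_range gQ in \<open>auto simp del: of_nat_Suc\<close>)
  have a_nn: "0 \<le> a k" for k unfolding a_def using g'_range by (auto intro!: integral_nonneg_AE simp del: of_nat_Suc)
  have b_nn: "0 \<le> b k" for k unfolding b_def using g_range by (auto intro!: integral_nonneg_AE simp del: of_nat_Suc)
  have e_nn: "0 \<le> e k" for k unfolding e_def by auto
  have e_lim: "e \<longlonglongrightarrow> 0"
  proof -
    have "(\<lambda>k. 1 / real (Suc k) ^ 2) \<longlonglongrightarrow> 0"
      using tendsto_mult[OF LIMSEQ_inverse_real_of_nat LIMSEQ_inverse_real_of_nat]
      by (simp add: power2_eq_square divide_inverse del: of_nat_Suc)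
    from tendsto_add[OF this tail] show ?thesis unfolding e_def E_def by simp
  qed
  have ab: "\<bar>b k - a k\<bar> \<le> e k" for k
  proof -
    let ?k = "Suc k"
    have pw: "\<bar>g ?k y - g' ?k y\<bar> \<le> 1 / real ?k ^ 2 + real ?k * indicator (E ?k) y" for y
    proof (cases "y \<in> E ?k")
      case True
      have r: "0 \<le> g ?k y" "g ?k y \<le> real ?k" "0 \<le> g' ?k y" "g' ?k y \<le> real ?k"
        using g_range g'_range by (auto simp del: of_nat_Suc)
      have nn: "0 \<le> 1 / real ?k ^ 2" by simp
      have i: "indicator (E ?k) y = (1::real)" using True by simp
      show ?thesis unfolding i mult_1_right abs_le_iff using r nn by (intro conjI; linarith)
    next
      case False
      then have "g' ?k y = g'' ?k y" "y \<in> D ?k" unfolding E_def by auto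
      then show ?thesis using g_close False by (auto simp del: of_nat_Suc)
    qed
    have int_E: "integrable Q (indicator (E ?k) :: _ \<Rightarrow> real)"
      using EQ by (intro integrable_real_indicator) (auto simp: less_top[symmetric] Q.emeasure_finite)
    have int_ind: "integrable Q (\<lambda>y. 1 / real ?k ^ 2 + real ?k * indicator (E ?k) y)"
      using EQ by (intro Bochner_Integration.integrable_add integrable_mult_right integrable_real_indicator) (auto simp: less_top[symmetric] Q.emeasure_finite)
    have "\<bar>b k - a k\<bar> = \<bar>\<integral>y. g ?k y - g' ?k y \<partial>Q\<bar>" unfolding a_def b_def
      by (subst Bochner_Integration.integral_diff) (use int_g int_g' in auto)
    also have "\<dots> \<le> (\<integral>y. \<bar>g ?k y - g' ?k y\<bar> \<partial>Q)" by (rule integral_abs_bound)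
    also have "\<dots> \<le> (\<integral>y. 1 / real ?k ^ 2 + real ?k * indicator (E ?k) y \<partial>Q)"
      by (rule integral_mono) (use pw int_ind int_g int_g' in auto)
    also have "\<dots> = e k" unfolding e_def using EQ int_ind
      by (subst Bochner_Integration.integral_add) (auto simp: Q.emeasure_space_1 Q.prob_space int_E simp del: of_nat_Suc)
    finally show ?thesis .
  qed
  have a_lim: "(\<lambda>k. ennreal (a k)) \<longlonglongrightarrow> (\<integral>\<^sup>+y. ennreal (gg y) \<partial>Q)"
  proof -
    have "(\<lambda>k. \<integral>\<^sup>+y. ennreal (g' (Suc k) y) \<partial>Q) \<longlonglongrightarrow> (\<integral>\<^sup>+y. ennreal (gg y) \<partial>Q)"
    proof (rule nn_integral_LIMSEQ)
      show "incseq (\<lambda>k y. ennreal (g' (Suc k) y))"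
        by (rule incseq_SucI) (use g'_mono in \<open>auto simp: le_fun_def intro!: ennreal_leI\<close>)
      show "(\<lambda>y. ennreal (g' (Suc k) y)) \<in> borel_measurable Q" for k using g'Q by auto
      show "(\<lambda>k. ennreal (g' (Suc k) y)) \<longlonglongrightarrow> ennreal (gg y)" for y
        using LIMSEQ_Suc[OF g'_lim[rule_format]] by (rule tendsto_ennrealI)
    qed
    moreover have "ennreal (a k) = (\<integral>\<^sup>+y. ennreal (g' (Suc k) y) \<partial>Q)" for k
      unfolding a_def using int_g' g'_range
      by (subst nn_integral_eq_integral) (auto simp del: of_nat_Suc)
    ultimately show ?thesis by simp
  qed
  have up: "(\<lambda>k. ennreal (a k) + ennreal (e k)) \<longlonglongrightarrow> (\<integral>\<^sup>+y. ennreal (gg y) \<partial>Q)"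
    using tendsto_add[OF a_lim tendsto_ennrealI[OF e_lim]] by simp
  have lo: "(\<lambda>k. ennreal (a k) - ennreal (e k)) \<longlonglongrightarrow> (\<integral>\<^sup>+y. ennreal (gg y) \<partial>Q)"
    using tendsto_diff_ennreal_general[OF a_lim tendsto_ennrealI[OF e_lim]] by simp
  have "(\<lambda>k. ennreal (b k)) \<longlonglongrightarrow> (\<integral>\<^sup>+y. ennreal (gg y) \<partial>Q)"
  proof (rule tendsto_sandwich[OF _ _ lo up])
    show "\<forall>\<^sub>F k in sequentially. ennreal (a k) - ennreal (e k) \<le> ennreal (b k)"
    proof (intro always_eventually allI)
      fix k have "a k - e k \<le> b k" using ab[of k] by (simp add: abs_le_iff)
      then show "ennreal (a k) - ennreal (e k) \<le> ennreal (b k)"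
        by (simp add: ennreal_minus e_nn ennreal_leI)
    qed
    show "\<forall>\<^sub>F k in sequentially. ennreal (b k) \<le> ennreal (a k) + ennreal (e k)"
    proof (intro always_eventually allI)
      fix k have "b k \<le> a k + e k" using ab[of k] by (simp add: abs_le_iff)
      then show "ennreal (b k) \<le> ennreal (a k) + ennreal (e k)"
        using a_nn[of k] e_nn[of k] by (simp add: ennreal_leI flip: ennreal_plus)
    qed
  qed
  then show ?thesis unfolding b_def by (rule filterlim_sequentially_Suc[THEN iffD1])
qed

lemma part1_x:
  fixes R :: "(real \<Rightarrow> real^'n) measure" and P :: "real \<Rightarrow> real \<Rightarrow> real^'n \<Rightarrow> (real^'n) measure"
    and g' g'' g :: "nat \<Rightarrow> real^'n \<Rightarrow> real" and gg :: "real^'n \<Rightarrow> real" and D :: "nat \<Rightarrow> (real^'n) set"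
  assumes RS: "sets R = sets (path_space T)" and SM: "strong_markov_transitions R T P"
    and t: "0 \<le> t" "t \<le> T"
    and g'_simple: "\<forall>k\<ge>1. simple_function borel (g' k)"
    and g'_range: "\<forall>k\<ge>1. \<forall>y. g' k y \<in> {0..real k}"
    and g'_mono: "\<forall>k\<ge>1. \<forall>y. g' k y \<le> g' (Suc k) y"
    and g'_lim: "\<forall>y. (\<lambda>k. g' k y) \<longlonglongrightarrow> gg y"
    and g''_cont: "\<forall>k\<ge>1. continuous_on UNIV (g'' k)"
    and g''_close: "\<forall>k\<ge>1. emeasure (distr R borel (\<lambda>\<omega>. \<omega> T)) {y. g' k y \<noteq> g'' k y} \<le> ennreal (1 / real k ^ 3)"
    and D_compact: "\<forall>k\<ge>1. compact (D k)"
    and D_large: "\<forall>k\<ge>1. emeasure (distr R borel (\<lambda>\<omega>. \<omega> T)) (- D k) \<le> ennreal (1 / real k ^ 3)"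
    and g_smooth: "\<forall>k\<ge>1. smooth_fun (g k) \<and> compact_support (g k)"
    and g_range: "\<forall>k\<ge>1. \<forall>y. 0 \<le> g k y \<and> g k y \<le> real k"
    and g_close: "\<forall>k\<ge>1. \<forall>y\<in>D k. \<bar>g k y - g'' k y\<bar> \<le> 1 / real k ^ 2"
  shows "AE x in distr R borel (\<lambda>\<omega>. \<omega> t).
           (\<lambda>k. ennreal (\<integral>y. g k y \<partial>P t T x)) \<longlonglongrightarrow> (\<integral>\<^sup>+y. ennreal (gg y) \<partial>P t T x)"
proof -
  let ?\<mu> = "distr R borel (\<lambda>\<omega>::real\<Rightarrow>real^'n. \<omega> t)"
  let ?RT = "distr R borel (\<lambda>\<omega>::real\<Rightarrow>real^'n. \<omega> T)"
  define E where "E k = {y. g' k y \<noteq> g'' k y} \<union> - D k" for k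
  have K: "P t T \<in> borel \<rightarrow>\<^sub>M prob_algebra borel" by (rule kernel_meas[OF SM]) (use t in auto)
  have g'_meas: "g' k \<in> borel_measurable borel" if "k \<ge> 1" for k
    using g'_simple that by (auto intro: borel_measurable_simple_function)
  have g''_meas: "g'' k \<in> borel_measurable borel" if "k \<ge> 1" for k
    using g''_cont that by (auto intro: borel_measurable_continuous_onI)
  have g_meas: "g k \<in> borel_measurable borel" if "k \<ge> 1" for k
  proof -
    have "continuous_on UNIV (pderivs [] (g k))" using g_smooth that unfolding smooth_fun_def by blast
    then show ?thesis by (auto intro: borel_measurable_continuous_onI)
  qed
  have D_meas: "D k \<in> sets borel" if "k \<ge> 1" for k
    using D_compact that by (auto intro: borel_closed compact_imp_closed)
  have E1_meas: "{y. g' k y \<noteq> g'' k y} \<in> sets borel" if "k \<ge> 1" for k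
  proof -
    have [measurable]: "g' k \<in> borel_measurable borel" "g'' k \<in> borel_measurable borel"
      using g'_meas g''_meas that by auto
    show ?thesis by measurable
  qed
  have E_meas: "E k \<in> sets borel" if "k \<ge> 1" for k
    unfolding E_def using E1_meas[OF that] D_meas[OF that] by auto
  have RTE: "emeasure ?RT (E k) \<le> ennreal (2 / real k ^ 3)" if "k \<ge> 1" for k
  proof -
    have "emeasure ?RT (E k) \<le> emeasure ?RT {y. g' k y \<noteq> g'' k y} + emeasure ?RT (- D k)"
      unfolding E_def by (rule emeasure_subadditive) (use E1_meas[OF that] D_meas[OF that] in auto)
    also have "\<dots> \<le> ennreal (1 / real k ^ 3) + ennreal (1 / real k ^ 3)"
      using g''_close D_large that by (intro add_mono) auto
    also have "\<dots> = ennreal (2 / real k ^ 3)" by (simp flip: ennreal_plus)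
    finally show ?thesis .
  qed
  have emK: "(\<lambda>x. emeasure (P t T x) A) \<in> borel_measurable borel" if A: "A \<in> sets borel" for A
  proof -
    have "(\<lambda>x. \<integral>\<^sup>+y. indicator A y \<partial>(P t T x)) \<in> borel_measurable borel"
      by (rule kernel_nn_meas[OF K]) (use A in auto)
    moreover have "(\<integral>\<^sup>+y. indicator A y \<partial>(P t T x)) = emeasure (P t T x) A" for x
      using A kernel_prob(2)[OF K] by (simp add: nn_integral_indicator)
    ultimately show ?thesis by simp
  qed
  define S where "S x = (\<Sum>k. ennreal (real (Suc k) * measure (P t T x) (E (Suc k))))" for x
  have term_eq: "ennreal (real (Suc k) * measure (P t T x) (E (Suc k))) = ennreal (real (Suc k)) * emeasure (P t T x) (E (Suc k))" for k x
  proof -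
    interpret prob_space "P t T x" using kernel_prob(1)[OF K] .
    show ?thesis by (simp add: emeasure_eq_measure ennreal_mult)
  qed
  have term_meas: "(\<lambda>x. ennreal (real (Suc k) * measure (P t T x) (E (Suc k)))) \<in> borel_measurable borel" for k
    unfolding term_eq using emK[OF E_meas[of "Suc k"]] by simp
  have S_meas: "S \<in> borel_measurable ?\<mu>"
    unfolding S_def using term_meas by (auto intro!: borel_measurable_suminf)
  have sum_fin: "summable (\<lambda>k. 2 / real (Suc k) ^ 2)"
  proof -
    have "summable (\<lambda>n. inverse (real n ^ 2))" by (rule inverse_power_summable) simp
    then have "summable (\<lambda>n. inverse (real (Suc n) ^ 2))" by (subst summable_Suc_iff)
    then have "summable (\<lambda>n. 2 * inverse (real (Suc n) ^ 2))" by (rule summable_mult)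
    then show ?thesis by (simp add: divide_inverse del: of_nat_Suc)
  qed
  have "(\<integral>\<^sup>+x. S x \<partial>?\<mu>) = (\<Sum>k. \<integral>\<^sup>+x. ennreal (real (Suc k) * measure (P t T x) (E (Suc k))) \<partial>?\<mu>)"
    unfolding S_def using term_meas by (intro nn_integral_suminf) auto
  also have "\<dots> \<le> (\<Sum>k. ennreal (2 / real (Suc k) ^ 2))"
  proof (intro suminf_le summableI)
    fix k
    have "(\<integral>\<^sup>+x. ennreal (real (Suc k) * measure (P t T x) (E (Suc k))) \<partial>?\<mu>)
        = ennreal (real (Suc k)) * (\<integral>\<^sup>+x. emeasure (P t T x) (E (Suc k)) \<partial>?\<mu>)"
      unfolding term_eq using emK[OF E_meas[of "Suc k"]] by (intro nn_integral_cmult) auto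
    also have "\<dots> = ennreal (real (Suc k)) * emeasure ?RT (E (Suc k))"
      by (subst markov_emeasure[OF RS SM t]) (use E_meas in auto)
    also have "\<dots> \<le> ennreal (real (Suc k)) * ennreal (2 / real (Suc k) ^ 3)"
      by (intro mult_left_mono RTE) auto
    also have "\<dots> = ennreal (real (Suc k) * (2 / real (Suc k) ^ 3))"
      by (rule ennreal_mult[symmetric]) auto
    also have "real (Suc k) * (2 / real (Suc k) ^ 3) = 2 / real (Suc k) ^ 2"
      by (simp add: power3_eq_cube power2_eq_square field_simps del: of_nat_Suc)
    finally show "(\<integral>\<^sup>+x. ennreal (real (Suc k) * measure (P t T x) (E (Suc k))) \<partial>?\<mu>) \<le> ennreal (2 / real (Suc k) ^ 2)" .
  qed
  also have "\<dots> < \<infinity>"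
  proof -
    have "(\<Sum>k. ennreal (2 / real (Suc k) ^ 2)) \<noteq> top" by (rule ennreal_suminf_neq_top[OF sum_fin]) simp
    then show ?thesis unfolding infinity_ennreal_def by (simp add: less_top)
  qed
  finally have "(\<integral>\<^sup>+x. S x \<partial>?\<mu>) \<noteq> \<infinity>" by simp
  then have "AE x in ?\<mu>. S x \<noteq> \<infinity>" by (rule nn_integral_PInf_AE[OF S_meas])
  then show ?thesis
  proof (rule AE_mp, intro AE_I2 impI)
    fix x assume Sx: "S x \<noteq> \<infinity>"
    have "summable (\<lambda>k. real (Suc k) * measure (P t T x) (E (Suc k)))"
      by (rule summable_suminf_not_top) (use Sx in \<open>auto simp: S_def\<close>)
    then have tail: "(\<lambda>k. real (Suc k) * measure (P t T x) (E (Suc k))) \<longlonglongrightarrow> 0"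
      by (rule summable_LIMSEQ_zero)
    show "(\<lambda>k. ennreal (\<integral>y. g k y \<partial>P t T x)) \<longlonglongrightarrow> (\<integral>\<^sup>+y. ennreal (gg y) \<partial>P t T x)"
      by (rule conv_pointwise[OF kernel_prob[OF K] g'_meas g'_range g'_mono g'_lim g_meas g_range g_close
            E_meas[unfolded E_def] tail[unfolded E_def]])
  qed
qed


lemma markov_0t:
  fixes R :: "(real \<Rightarrow> real^'n) measure"
  assumes RS: "sets R = sets (path_space T)" and SM: "strong_markov_transitions R T P"
    and t: "0 \<le> t" "t \<le> T"
    and f: "f \<in> borel_measurable (borel :: (real^'n) measure)"
    and phi: "\<phi> \<in> borel_measurable (borel :: (real^'n) measure)"
  shows "(\<integral>\<^sup>+\<omega>. \<phi> (\<omega> 0) * (\<integral>\<^sup>+y. f y \<partial>(P t T (\<omega> t))) \<partial>R) =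
         (\<integral>\<^sup>+\<omega>. \<phi> (\<omega> 0) * (\<integral>\<^sup>+y. f y \<partial>(P 0 T (\<omega> 0))) \<partial>R)"
  using markov_gen[OF RS SM _ _ _ f phi, of 0 t] markov_gen[OF RS SM _ _ _ f phi, of 0 0] t by simp




theorem mainTheorem11:
  fixes T :: real
    and R :: "(real \<Rightarrow> real^'n) measure"
    and P :: "real \<Rightarrow> real \<Rightarrow> real^'n \<Rightarrow> (real^'n) measure"
    and b :: "real \<Rightarrow> real^'n \<Rightarrow> real^'n"
    and a :: "real \<Rightarrow> real^'n \<Rightarrow> real^'n^'n"
    and J :: "real \<Rightarrow> real^'n \<Rightarrow> (real^'n) measure"
    and \<rho>0 \<rho>T :: "(real^'n) measure"
    and ff gg :: "real^'n \<Rightarrow> real"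
    and g' g'' g :: "nat \<Rightarrow> real^'n \<Rightarrow> real"
    and D :: "nat \<Rightarrow> (real^'n) set"
    and R0 RT :: "(real^'n) measure"
    and S0 :: "(real^'n) set"
    and PP :: "(real \<Rightarrow> real^'n) measure"
    and hh :: "real \<Rightarrow> real^'n \<Rightarrow> ennreal"
    and h :: "nat \<Rightarrow> real \<Rightarrow> real^'n \<Rightarrow> real"
    and A :: "nat \<Rightarrow> (real^'n) set"
    and r :: "nat \<Rightarrow> real"
  defines "R0 \<equiv> distr R borel (\<lambda>\<omega>. \<omega> 0)"
    and "RT \<equiv> distr R borel (\<lambda>\<omega>. \<omega> T)"
    and "S0 \<equiv> {x. RN_deriv R0 \<rho>0 x = 0}"
    and "PP \<equiv> density R (\<lambda>\<omega>. indicator (- S0) (\<omega> 0) * RN_deriv R0 \<rho>0 (\<omega> 0))"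
    and "hh \<equiv> (\<lambda>t x. \<integral>\<^sup>+y. ennreal (gg y) \<partial>(P t T x))"
    and "h \<equiv> (\<lambda>k t x. \<integral>y. g k y \<partial>(P t T x))"
    and "A \<equiv> (\<lambda>k. {x. h k 0 x > 0})"
    and "r \<equiv> (\<lambda>k. measure \<rho>0 (A k))"
  assumes T_pos: "T > 0"
    \<comment> \<open>R: strong Markov path measure on D([0,T];R^n) with transitions P_{s,t}\<close>
    and R_sets: "sets R = sets (path_space T)"
    and R_marg_sigma_finite: "\<forall>t\<in>{0..T}. sigma_finite_measure (distr R borel (\<lambda>\<omega>. \<omega> t))"
    and R_markov: "strong_markov_transitions R T P"
    \<comment> \<open>marginal constraints\<close>
    and rho0_prob: "prob_space \<rho>0" and rho0_sets: "sets \<rho>0 = sets borel"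
    and rhoT_prob: "prob_space \<rho>T" and rhoT_sets: "sets \<rho>T = sets borel"
    and rho0_ac: "absolutely_continuous R0 \<rho>0"
    and rhoT_ac: "absolutely_continuous RT \<rho>T"
    \<comment> \<open>Schroedinger system for ff, gg\<close>
    and ff_meas: "ff \<in> borel_measurable borel" and ff_nonneg: "\<forall>x. 0 \<le> ff x"
    and gg_meas: "gg \<in> borel_measurable borel" and gg_nonneg: "\<forall>y. 0 \<le> gg y"
    and schr0: "AE x in R0. ennreal (ff x) * (\<integral>\<^sup>+y. ennreal (gg y) \<partial>(P 0 T x)) = RN_deriv R0 \<rho>0 x"
    and schrT: "AE y in RT. ennreal (gg y) * cond_exp_given_X R (\<lambda>\<omega>. ennreal (ff (\<omega> 0))) T y
                  = RN_deriv RT \<rho>T y"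
    \<comment> \<open>Assumption (A3)\<close>
    and A3: "\<forall>u. smooth_fun u \<and> compact_support u \<longrightarrow>
               C12_backward_eq T b a J (\<lambda>t x. \<integral>y. u y \<partial>(P t T x))"
    \<comment> \<open>construction of g'_k, g''_k, D_k, g_k (k >= 1)\<close>
    and g'_simple: "\<forall>k\<ge>1. simple_function borel (g' k)"
    and g'_range: "\<forall>k\<ge>1. \<forall>y. g' k y \<in> {0..real k}"
    and g'_mono: "\<forall>k\<ge>1. \<forall>y. g' k y \<le> g' (Suc k) y"
    and g'_lim: "\<forall>y. (\<lambda>k. g' k y) \<longlonglongrightarrow> gg y"
    and g''_cont: "\<forall>k\<ge>1. continuous_on UNIV (g'' k)"
    and g''_bdd: "\<forall>k\<ge>1. bounded (range (g'' k))"
    and g''_nonneg: "\<forall>k\<ge>1. \<forall>y. 0 \<le> g'' k y"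
    and g''_close: "\<forall>k\<ge>1. emeasure RT {y. g' k y \<noteq> g'' k y} \<le> ennreal (1 / real k ^ 3)"
    and D_compact: "\<forall>k\<ge>1. compact (D k)"
    and D_large: "\<forall>k\<ge>1. emeasure RT (- D k) \<le> ennreal (1 / real k ^ 3)"
    and g_smooth: "\<forall>k\<ge>1. smooth_fun (g k) \<and> compact_support (g k)"
    and g_range: "\<forall>k\<ge>1. \<forall>y. 0 \<le> g k y \<and> g k y \<le> real k"
    and g_close: "\<forall>k\<ge>1. \<forall>y\<in>D k. \<bar>g k y - g'' k y\<bar> \<le> 1 / real k ^ 2"
  shows "\<forall>t\<in>{0..T}.
           (AE \<omega> in PP. (\<lambda>k. ennreal (h k t (\<omega> t))) \<longlonglongrightarrow> hh t (\<omega> t)) \<and>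
           (let Y = (\<lambda>\<omega>. enn2real (hh t (\<omega> t)) / enn2real (hh 0 (\<omega> 0)));
                Yk = (\<lambda>k \<omega>. indicator (A k) (\<omega> 0) / r k * (h k t (\<omega> t) / h k 0 (\<omega> 0)))
            in integrable PP Y \<and> (\<forall>k\<ge>1. integrable PP (Yk k)) \<and>
               (\<lambda>k. \<integral>\<omega>. \<bar>Yk k \<omega> - Y \<omega>\<bar> \<partial>PP) \<longlonglongrightarrow> 0)"
  proof -
  have XM: "(\<lambda>\<omega>::real\<Rightarrow>real^'n. \<omega> s) \<in> R \<rightarrow>\<^sub>M borel" if "s \<in> {0..T}" for s
    using X_meas[OF R_sets that] .
  have K: "P s T \<in> borel \<rightarrow>\<^sub>M prob_algebra borel" if "s \<in> {0..T}" for s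
    by (rule kernel_meas[OF R_markov]) (use that in auto)
  have g_meas: "g k \<in> borel_measurable borel" if "k \<ge> 1" for k
  proof -
    have "continuous_on UNIV (pderivs [] (g k))" using g_smooth that unfolding smooth_fun_def by blast
    then show ?thesis by (auto intro: borel_measurable_continuous_onI)
  qed
  have h_meas: "h k s \<in> borel_measurable borel" if "k \<ge> 1" "s \<in> {0..T}" for k s
    unfolding h_def by (rule kernel_int_meas[OF K[OF that(2)] g_meas[OF that(1)]])
  have h_int: "integrable (P s T x) (g k)" if "k \<ge> 1" "s \<in> {0..T}" for k s x
  proof -
    interpret prob_space "P s T x" using kernel_prob(1)[OF K[OF that(2)]] .
    have "g k \<in> borel_measurable (P s T x)"
      using g_meas[OF that(1)] measurable_cong_sets[OF kernel_prob(2)[OF K[OF that(2)]] refl] by blast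
    then show ?thesis
      by (intro integrable_const_bound[where B="real k"]) (use g_range that in auto)
  qed
  have h_nn: "0 \<le> h k s x" if "k \<ge> 1" "s \<in> {0..T}" for k s x
    unfolding h_def using g_range that by (auto intro!: integral_nonneg_AE)
  have h_enn: "(\<integral>\<^sup>+y. ennreal (g k y) \<partial>P s T x) = ennreal (h k s x)" if "k \<ge> 1" "s \<in> {0..T}" for k s x
    unfolding h_def using h_int[OF that] g_range that by (subst nn_integral_eq_integral) auto
  have hh_meas: "hh s \<in> borel_measurable borel" if "s \<in> {0..T}" for s
    unfolding hh_def by (rule kernel_nn_meas[OF K[OF that]]) (use gg_meas in auto)
  have P1: "AE x in distr R borel (\<lambda>\<omega>. \<omega> s). (\<lambda>k. ennreal (h k s x)) \<longlonglongrightarrow> hh s x" if "s \<in> {0..T}" for s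
    unfolding h_def hh_def
    by (rule part1_x[OF R_sets R_markov _ _ g'_simple g'_range g'_mono g'_lim g''_cont _ D_compact _ g_smooth g_range g_close])
       (use that g''_close D_large in \<open>auto simp: RT_def\<close>)
  have P1R: "AE \<omega> in R. (\<lambda>k. ennreal (h k s (\<omega> s))) \<longlonglongrightarrow> hh s (\<omega> s)" if "s \<in> {0..T}" for s
    by (rule AE_distrD[OF XM[OF that] P1[OF that]])
  have T0: "0 \<in> {0..T}" using T_pos by auto
  interpret R0: sigma_finite_measure R0 using R_marg_sigma_finite T0 unfolding R0_def by blast
  have sR0: "sets R0 = sets borel" unfolding R0_def by simp
  define wR where "wR = RN_deriv R0 \<rho>0"
  have wR_meas[measurable]: "wR \<in> borel_measurable borel"
    unfolding wR_def using borel_measurable_RN_deriv measurable_cong_sets[OF sR0 refl] by blast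
  have rho0_dens: "density R0 wR = \<rho>0"
    unfolding wR_def by (rule R0.density_RN_deriv[OF rho0_ac]) (simp add: rho0_sets sR0)
  have wR_fin: "AE x in R0. wR x \<noteq> \<infinity>"
  proof -
    interpret rho: prob_space \<rho>0 by (rule rho0_prob)
    show ?thesis unfolding wR_def
      by (rule R0.RN_deriv_finite[OF _ rho0_ac]) (auto simp: rho0_sets sR0 rho.sigma_finite_measure_axioms)
  qed
  have wR_R0: "wR \<in> borel_measurable R0" using wR_meas measurable_cong_sets[OF sR0 refl] by blast
  have S0_meas[measurable]: "S0 \<in> sets borel" unfolding S0_def wR_def[symmetric] by measurable
  have rho0_S0: "emeasure \<rho>0 S0 = 0"
  proof -
    have "emeasure \<rho>0 S0 = (\<integral>\<^sup>+x. wR x * indicator S0 x \<partial>R0)"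
      unfolding rho0_dens[symmetric] by (rule emeasure_density[OF wR_R0]) (simp add: sR0)
    also have "\<dots> = (\<integral>\<^sup>+x. 0 \<partial>R0)" by (intro nn_integral_cong) (auto simp: S0_def wR_def indicator_def)
    finally show ?thesis by simp
  qed
  define H0 where "H0 = hh 0"
  have H0_meas[measurable]: "H0 \<in> borel_measurable borel" unfolding H0_def by (rule hh_meas[OF T0])
  define G0 where "G0 = {x. x \<notin> S0 \<and> wR x \<noteq> \<infinity> \<and> 0 < H0 x \<and> H0 x \<noteq> \<infinity>}"
  have G0_meas[measurable]: "G0 \<in> sets borel" unfolding G0_def by measurable
  have G0a: "AE x in R0. x \<notin> S0 \<longrightarrow> x \<in> G0"
    using schr0 wR_fin
  proof (eventually_elim)
    case (elim x)
    show ?case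
    proof
      assume x: "x \<notin> S0"
      have eq: "ennreal (ff x) * H0 x = wR x" using elim(1) unfolding H0_def hh_def wR_def by simp
      have w0: "wR x \<noteq> 0" using x unfolding S0_def wR_def by simp
      have "H0 x \<noteq> 0" using eq w0 by auto
      moreover have "H0 x \<noteq> \<infinity>"
      proof
        assume inf: "H0 x = \<infinity>"
        show False
        proof (cases "ff x = 0")
          case True then show False using eq w0 by simp
        next
          case False
          then have "ennreal (ff x) \<noteq> 0" using ff_nonneg by auto
          then have "ennreal (ff x) * H0 x = \<infinity>" using inf by (simp add: ennreal_mult_top)
          then show False using eq elim(2) by simp
        qed
      qed
      ultimately show "x \<in> G0" unfolding G0_def using x elim(2) by (auto simp: zero_less_iff_neq_zero)
    qed
  qed
  have G0b: "AE x in \<rho>0. x \<in> G0"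
  proof -
    have "AE x in \<rho>0. x \<notin> S0 \<longrightarrow> x \<in> G0"
      by (rule absolutely_continuous_AE[OF _ rho0_ac G0a]) (simp add: rho0_sets sR0)
    moreover have "AE x in \<rho>0. x \<notin> S0"
      by (rule AE_not_in) (rule null_setsI[OF rho0_S0], simp add: rho0_sets)
    ultimately show ?thesis by eventually_elim auto
  qed
  define w where "w x = indicator (- S0) x * wR x" for x
  have w_meas[measurable]: "w \<in> borel_measurable borel" unfolding w_def by measurable
  have PP_eq: "PP = density R (\<lambda>\<omega>. w (\<omega> 0))" unfolding PP_def w_def wR_def ..
  have wX0[measurable]: "(\<lambda>\<omega>. w (\<omega> 0)) \<in> borel_measurable R"
    using measurable_comp[OF XM[OF T0] w_meas] by (simp add: comp_def)
  have AE_PP: "AE \<omega> in PP. Q \<omega>" if "AE \<omega> in R. Q \<omega>" for Q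
    unfolding PP_eq AE_density[OF wX0] using that by auto
  show ?thesis
  proof (intro ballI conjI)
    fix t assume t: "t \<in> {0..T}"
    show "AE \<omega> in PP. (\<lambda>k. ennreal (h k t (\<omega> t))) \<longlonglongrightarrow> hh t (\<omega> t)"
      by (rule AE_PP[OF P1R[OF t]])
    have Xt[measurable]: "(\<lambda>\<omega>::real\<Rightarrow>real^'n. \<omega> t) \<in> R \<rightarrow>\<^sub>M borel" by (rule XM[OF t])
    have X0[measurable]: "(\<lambda>\<omega>::real\<Rightarrow>real^'n. \<omega> 0) \<in> R \<rightarrow>\<^sub>M borel" by (rule XM[OF T0])
    have hh0_meas[measurable]: "hh 0 \<in> borel_measurable borel" by (rule hh_meas[OF T0])
    have hht_meas[measurable]: "hh t \<in> borel_measurable borel" by (rule hh_meas[OF t])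
    have R0_eq: "R0 = distr R borel (\<lambda>\<omega>. \<omega> 0)" unfolding R0_def ..
    have sPP: "sets PP = sets R" unfolding PP_eq by simp
    have mPP: "f \<in> borel_measurable PP" if "f \<in> borel_measurable R" for f :: "_ \<Rightarrow> real"
      using that measurable_cong_sets[OF sPP refl] by blast
    have h0_meas[measurable]: "h k 0 \<in> borel_measurable borel" if "k \<ge> 1" for k using h_meas[OF that T0] .
    have ht_meas[measurable]: "h k t \<in> borel_measurable borel" if "k \<ge> 1" for k using h_meas[OF that t] .
    have A_meas[measurable]: "A k \<in> sets borel" if "k \<ge> 1" for k
    proof -
      have [measurable]: "h k 0 \<in> borel_measurable borel" using h0_meas[OF that] .
      show ?thesis unfolding A_def by measurable
    qed
    interpret rho: prob_space \<rho>0 by (rule rho0_prob)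
    have r_eq: "emeasure \<rho>0 (A k) = ennreal (r k)" for k
      unfolding r_def by (rule rho.emeasure_eq_measure)
    have r_nn: "0 \<le> r k" for k unfolding r_def by simp
    define Y where "Y = (\<lambda>\<omega>. enn2real (hh t (\<omega> t)) / enn2real (hh 0 (\<omega> 0)))"
    define Yk where "Yk = (\<lambda>k \<omega>. indicator (A k) (\<omega> 0) / r k * (h k t (\<omega> t) / h k 0 (\<omega> 0)))"
    have Y_meas[measurable]: "Y \<in> borel_measurable R" unfolding Y_def H0_def[symmetric] by measurable
    have Yk_meas[measurable]: "Yk k \<in> borel_measurable R" if "k \<ge> 1" for k
    proof -
      have [measurable]: "h k 0 \<in> borel_measurable borel" "h k t \<in> borel_measurable borel" "A k \<in> sets borel"
        using that h0_meas ht_meas A_meas by auto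
      show ?thesis unfolding Yk_def by measurable
    qed
    have Y_nn: "0 \<le> Y \<omega>" for \<omega> unfolding Y_def by simp
    have Yk_nn: "0 \<le> Yk k \<omega>" if "k \<ge> 1" for k \<omega>
      unfolding Yk_def using h_nn[OF that(1) t] h_nn[OF that(1) T0] r_nn by simp
    define \<phi>Y where "\<phi>Y x = indicator G0 x * ennreal (enn2real (wR x) / enn2real (H0 x))" for x
    have \<phi>Y_meas[measurable]: "\<phi>Y \<in> borel_measurable borel" unfolding \<phi>Y_def by measurable
    have I1: "(\<integral>\<^sup>+\<omega>. \<phi>Y (\<omega> 0) * hh t (\<omega> t) \<partial>R) = 1"
    proof -
      have "(\<integral>\<^sup>+\<omega>. \<phi>Y (\<omega> 0) * hh t (\<omega> t) \<partial>R) = (\<integral>\<^sup>+\<omega>. \<phi>Y (\<omega> 0) * hh 0 (\<omega> 0) \<partial>R)"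
        unfolding hh_def using t by (intro markov_0t[OF R_sets R_markov]) (auto intro: measurable_compose[OF gg_meas])
      also have "\<dots> = (\<integral>\<^sup>+x. \<phi>Y x * H0 x \<partial>R0)"
        unfolding R0_eq H0_def by (subst nn_integral_distr) auto
      also have "\<dots> = (\<integral>\<^sup>+x. wR x * indicator G0 x \<partial>R0)"
      proof (intro nn_integral_cong)
        fix x show "\<phi>Y x * H0 x = wR x * indicator G0 x"
        proof (cases "x \<in> G0")
          case True
          then have "wR x = ennreal (enn2real (wR x))" "H0 x = ennreal (enn2real (H0 x))" "0 < enn2real (H0 x)"
            unfolding G0_def by (auto simp: enn2real_positive_iff less_top)
          then show ?thesis using True unfolding \<phi>Y_def
            by (metis (no_types, lifting) divide_nonneg_nonneg enn2real_nonneg ennreal_mult' indicator_simps(1)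
                mult.comm_neutral mult.commute nonzero_divide_eq_eq order_less_irrefl)
        qed (simp add: \<phi>Y_def)
      qed
      also have "\<dots> = emeasure \<rho>0 G0"
        unfolding rho0_dens[symmetric] by (rule emeasure_density[symmetric]) (auto simp: sR0 wR_R0)
      also have "\<dots> = (\<integral>\<^sup>+x. indicator G0 x \<partial>\<rho>0)"
        using G0_meas by (subst nn_integral_indicator) (auto simp: rho0_sets)
      also have "\<dots> = (\<integral>\<^sup>+x. 1 \<partial>\<rho>0)"
        by (rule nn_integral_cong_AE) (use G0b in \<open>eventually_elim, simp\<close>)
      also have "\<dots> = 1" by (simp add: rho.emeasure_space_1)
      finally show ?thesis .
    qed
    have a1: "AE \<omega> in R. w (\<omega> 0) \<noteq> 0 \<longrightarrow> \<omega> 0 \<in> G0"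
    proof -
      have "AE x in R0. w x \<noteq> 0 \<longrightarrow> x \<in> G0" using G0a by eventually_elim (auto simp: w_def)
      then show ?thesis unfolding R0_eq by (rule AE_distrD[OF X0])
    qed
    have a4: "AE \<omega> in R. \<phi>Y (\<omega> 0) * hh t (\<omega> t) \<noteq> \<infinity>"
      by (rule nn_integral_PInf_AE) (auto simp: I1)
    have I2: "(\<integral>\<^sup>+\<omega>. ennreal (Y \<omega>) \<partial>PP) = 1"
    proof -
      have "(\<integral>\<^sup>+\<omega>. ennreal (Y \<omega>) \<partial>PP) = (\<integral>\<^sup>+\<omega>. w (\<omega> 0) * ennreal (Y \<omega>) \<partial>R)"
        unfolding PP_eq by (rule nn_integral_density) auto
      also have "\<dots> = (\<integral>\<^sup>+\<omega>. \<phi>Y (\<omega> 0) * hh t (\<omega> t) \<partial>R)"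
      proof (rule nn_integral_cong_AE)
        show "AE \<omega> in R. w (\<omega> 0) * ennreal (Y \<omega>) = \<phi>Y (\<omega> 0) * hh t (\<omega> t)"
          using a1 a4
        proof eventually_elim
          case (elim \<omega>)
          show ?case
          proof (cases "\<omega> 0 \<in> G0")
            case False
            then show ?thesis using elim(1) by (simp add: \<phi>Y_def)
          next
            case True
            define a where "a = enn2real (wR (\<omega> 0))"
            define b where "b = enn2real (H0 (\<omega> 0))"
            have G: "\<omega> 0 \<notin> S0" "wR (\<omega> 0) \<noteq> \<infinity>" "0 < H0 (\<omega> 0)" "H0 (\<omega> 0) \<noteq> \<infinity>"
              using True unfolding G0_def by auto
            have wa: "wR (\<omega> 0) = ennreal a" using G(2) unfolding a_def by (simp add: less_top)
            have a0: "0 < a" using G(1,2) unfolding a_def S0_def wR_def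
              by (simp add: enn2real_positive_iff less_top zero_less_iff_neq_zero)
            have Hb: "H0 (\<omega> 0) = ennreal b" using G(4) unfolding b_def by (simp add: less_top)
            have b0: "0 < b" using G(3,4) unfolding b_def by (simp add: enn2real_positive_iff less_top)
            have phi: "\<phi>Y (\<omega> 0) = ennreal (a / b)" using True unfolding \<phi>Y_def a_def b_def by simp
            have "ennreal (a / b) \<noteq> 0" using a0 b0 by simp
            then have fin: "hh t (\<omega> t) \<noteq> \<infinity>" using elim(2) phi by (auto simp: ennreal_mult_top)
            define c where "c = enn2real (hh t (\<omega> t))"
            have hc: "hh t (\<omega> t) = ennreal c" using fin unfolding c_def by (simp add: less_top)
            have c0: "0 \<le> c" unfolding c_def by simp
            have Yw: "Y \<omega> = c / b" unfolding Y_def c_def b_def H0_def ..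
            have ww: "w (\<omega> 0) = ennreal a" using G(1) wa by (simp add: w_def)
            have "w (\<omega> 0) * ennreal (Y \<omega>) = ennreal (a * (c / b))"
              unfolding ww Yw by (rule ennreal_mult[symmetric]) (use a0 b0 c0 in auto)
            also have "a * (c / b) = a / b * c" by simp
            also have "ennreal (a / b * c) = ennreal (a / b) * ennreal c"
              by (rule ennreal_mult) (use a0 b0 c0 in auto)
            finally show ?thesis unfolding phi hc .
          qed
        qed
      qed
      also have "\<dots> = 1" by (rule I1)
      finally show ?thesis .
    qed
    have intY: "integrable PP Y"
      by (rule integrableI_nonneg) (auto simp: I2 Y_nn intro!: mPP)
    have intY1: "(\<integral>\<omega>. Y \<omega> \<partial>PP) = 1"
      using nn_integral_eq_integral[OF intY] I2 Y_nn by simp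
    have Ik: "(\<integral>\<^sup>+\<omega>. ennreal (Yk k \<omega>) \<partial>PP) \<le> 1" if k1: "k \<ge> 1" for k
    proof -
      have [measurable]: "h k 0 \<in> borel_measurable borel" "h k t \<in> borel_measurable borel" "A k \<in> sets borel"
        using k1 h0_meas ht_meas A_meas by auto
      have [measurable]: "Yk k \<in> borel_measurable R" using Yk_meas[OF k1] .
      define \<phi>k where "\<phi>k x = w x * indicator (A k) x * ennreal (1 / (r k * h k 0 x))" for x
      have \<phi>k_meas[measurable]: "\<phi>k \<in> borel_measurable borel" unfolding \<phi>k_def by measurable
      have gk[measurable]: "(\<lambda>y. ennreal (g k y)) \<in> borel_measurable borel"
        using g_meas[OF k1] by measurable
      have "(\<integral>\<^sup>+\<omega>. ennreal (Yk k \<omega>) \<partial>PP) = (\<integral>\<^sup>+\<omega>. w (\<omega> 0) * ennreal (Yk k \<omega>) \<partial>R)"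
        unfolding PP_eq by (rule nn_integral_density) auto
      also have "\<dots> = (\<integral>\<^sup>+\<omega>. \<phi>k (\<omega> 0) * ennreal (h k t (\<omega> t)) \<partial>R)"
      proof (intro nn_integral_cong)
        fix \<omega> :: "real \<Rightarrow> real^'n"
        show "w (\<omega> 0) * ennreal (Yk k \<omega>) = \<phi>k (\<omega> 0) * ennreal (h k t (\<omega> t))"
        proof (cases "\<omega> 0 \<in> A k")
          case True
          have h0: "0 < h k 0 (\<omega> 0)" using True unfolding A_def by simp
          have ht: "0 \<le> h k t (\<omega> t)" using h_nn[OF k1 t] .
          have eq: "1 / r k * (h k t (\<omega> t) / h k 0 (\<omega> 0)) = 1 / (r k * h k 0 (\<omega> 0)) * h k t (\<omega> t)"
            by (cases "r k = 0") (auto simp: field_simps)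
          have "ennreal (1 / (r k * h k 0 (\<omega> 0)) * h k t (\<omega> t)) = ennreal (1 / (r k * h k 0 (\<omega> 0))) * ennreal (h k t (\<omega> t))"
            by (rule ennreal_mult) (use h0 ht r_nn in auto)
          then show ?thesis using True unfolding Yk_def \<phi>k_def by (simp add: eq mult.assoc)
        next
          case False
          then show ?thesis unfolding Yk_def \<phi>k_def by simp
        qed
      qed
      also have "\<dots> = (\<integral>\<^sup>+\<omega>. \<phi>k (\<omega> 0) * ennreal (h k 0 (\<omega> 0)) \<partial>R)"
      proof -
        have "(\<integral>\<^sup>+\<omega>. \<phi>k (\<omega> 0) * (\<integral>\<^sup>+y. ennreal (g k y) \<partial>P t T (\<omega> t)) \<partial>R) =
              (\<integral>\<^sup>+\<omega>. \<phi>k (\<omega> 0) * (\<integral>\<^sup>+y. ennreal (g k y) \<partial>P 0 T (\<omega> 0)) \<partial>R)"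
          by (rule markov_0t[OF R_sets R_markov]) (use t in auto)
        then show ?thesis by (simp only: h_enn[OF k1 t] h_enn[OF k1 T0])
      qed
      also have "\<dots> = (\<integral>\<^sup>+x. \<phi>k x * ennreal (h k 0 x) \<partial>R0)"
        unfolding R0_eq by (subst nn_integral_distr) auto
      also have "\<dots> = (\<integral>\<^sup>+x. ennreal (1 / r k) * (wR x * indicator (A k - S0) x) \<partial>R0)"
      proof (intro nn_integral_cong)
        fix x :: "real^'n"
        show "\<phi>k x * ennreal (h k 0 x) = ennreal (1 / r k) * (wR x * indicator (A k - S0) x)"
        proof (cases "x \<in> A k \<and> x \<notin> S0")
          case True
          have h0: "0 < h k 0 x" using True unfolding A_def by simp
          have "ennreal (1 / (r k * h k 0 x)) * ennreal (h k 0 x) = ennreal (1 / (r k * h k 0 x) * h k 0 x)"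
            by (rule ennreal_mult[symmetric]) (use h0 r_nn in auto)
          also have "1 / (r k * h k 0 x) * h k 0 x = 1 / r k" using h0 by (cases "r k = 0") (auto simp: field_simps)
          finally have e: "ennreal (1 / (r k * h k 0 x)) * ennreal (h k 0 x) = ennreal (1 / r k)" .
          show ?thesis using True unfolding \<phi>k_def w_def
            by (simp add: mult.assoc e[symmetric] ac_simps)
        next
          case False
          then show ?thesis unfolding \<phi>k_def w_def by (auto simp: indicator_def)
        qed
      qed
      also have "\<dots> = ennreal (1 / r k) * emeasure \<rho>0 (A k - S0)"
        unfolding rho0_dens[symmetric]
        by (subst emeasure_density) (auto simp: sR0 wR_R0 nn_integral_cmult measurable_cong_sets[OF sR0 refl])
      also have "\<dots> = ennreal (1 / r k) * ennreal (r k)"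
        by (subst emeasure_Diff_null_set) (auto simp: r_eq rho0_sets intro!: null_setsI rho0_S0)
      also have "\<dots> \<le> 1"
        using r_nn[of k] by (cases "r k = 0") (auto simp: ennreal_mult[symmetric])
      finally show ?thesis .
    qed
    have intYk: "integrable PP (Yk k)" if k1: "k \<ge> 1" for k
    proof (rule integrableI_nonneg)
      show "Yk k \<in> borel_measurable PP" by (rule mPP[OF Yk_meas[OF k1]])
      show "AE x in PP. 0 \<le> Yk k x" using Yk_nn[OF k1] by simp
      show "(\<integral>\<^sup>+x. ennreal (Yk k x) \<partial>PP) < \<infinity>" using Ik[OF k1] by (simp add: le_less_trans)
    qed
    have goal: "integrable PP Y \<and> (\<forall>k\<ge>1. integrable PP (Yk k)) \<and>
               (\<lambda>k. \<integral>\<omega>. \<bar>Yk k \<omega> - Y \<omega>\<bar> \<partial>PP) \<longlonglongrightarrow> 0"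
    proof (intro conjI allI impI)
      show "integrable PP Y" by (rule intY)
      show "integrable PP (Yk k)" if "k \<ge> 1" for k using intYk[OF that] .
      have sp_rho: "space \<rho>0 = UNIV" using sets_eq_imp_space_eq[OF rho0_sets] by simp
      have conv0: "AE x in \<rho>0. (\<lambda>k. ennreal (h k 0 x)) \<longlonglongrightarrow> hh 0 x"
      proof (rule absolutely_continuous_AE[OF _ rho0_ac])
        show "sets \<rho>0 = sets R0" by (simp add: rho0_sets sR0)
        show "AE x in R0. (\<lambda>k. ennreal (h k 0 x)) \<longlonglongrightarrow> hh 0 x" using P1[OF T0] unfolding R0_def .
      qed
      have rk: "(\<lambda>k. r (Suc k)) \<longlonglongrightarrow> 1"
      proof -
        have lim: "AE x in \<rho>0. (\<lambda>k. indicator (A (Suc k)) x :: real) \<longlonglongrightarrow> 1"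
          using G0b conv0
        proof eventually_elim
          case (elim x)
          have "0 < hh 0 x" using elim(1) unfolding G0_def H0_def by auto
          then have "eventually (\<lambda>k. 0 < ennreal (h k 0 x)) sequentially"
            by (rule order_tendstoD(1)[OF elim(2)])
          then have "eventually (\<lambda>k. x \<in> A k) sequentially"
            by eventually_elim (simp add: A_def)
          then have "eventually (\<lambda>k. x \<in> A (Suc k)) sequentially"
            by (rule eventually_sequentially_Suc[THEN iffD2])
          then have "eventually (\<lambda>k. indicator (A (Suc k)) x = (1::real)) sequentially"
            by eventually_elim simp
          then show ?case by (rule tendsto_eventually)
        qed
        have "(\<lambda>k. \<integral>x. indicator (A (Suc k)) x \<partial>\<rho>0) \<longlonglongrightarrow> (\<integral>x. (1::real) \<partial>\<rho>0)"
        proof (rule integral_dominated_convergence[where w="\<lambda>_. 1"])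
          show "(\<lambda>x. 1::real) \<in> borel_measurable \<rho>0" by simp
          show "(\<lambda>x. indicator (A (Suc k)) x :: real) \<in> borel_measurable \<rho>0" for k
            using A_meas[of "Suc k"] by (intro borel_measurable_indicator) (simp add: rho0_sets)
          show "integrable \<rho>0 (\<lambda>x. 1::real)" by simp
          show "AE x in \<rho>0. (\<lambda>k. indicator (A (Suc k)) x :: real) \<longlonglongrightarrow> 1" by (rule lim)
          show "AE x in \<rho>0. norm (indicator (A (Suc k)) x :: real) \<le> 1" for k by (simp add: indicator_def)
        qed
        then show ?thesis using rho.prob_space by (simp add: r_def sp_rho)
      qed
      have AEconv: "AE \<omega> in PP. (\<lambda>k. Yk (Suc k) \<omega>) \<longlonglongrightarrow> Y \<omega>"
        unfolding PP_eq AE_density[OF wX0]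
        using a1 a4 P1R[OF T0] P1R[OF t]
      proof eventually_elim
        case (elim \<omega>)
        show ?case
        proof
          assume wpos: "0 < w (\<omega> 0)"
          then have True: "\<omega> 0 \<in> G0" using elim(1) by auto
          define b where "b = enn2real (H0 (\<omega> 0))"
          have G: "\<omega> 0 \<notin> S0" "wR (\<omega> 0) \<noteq> \<infinity>" "0 < H0 (\<omega> 0)" "H0 (\<omega> 0) \<noteq> \<infinity>"
            using True unfolding G0_def by auto
          have a0: "0 < enn2real (wR (\<omega> 0))" using G(1,2) unfolding S0_def wR_def
            by (simp add: enn2real_positive_iff less_top zero_less_iff_neq_zero)
          have b0: "0 < b" using G(3,4) unfolding b_def by (simp add: enn2real_positive_iff less_top)
          have phi: "\<phi>Y (\<omega> 0) = ennreal (enn2real (wR (\<omega> 0)) / b)" using True unfolding \<phi>Y_def b_def by simp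
          have "ennreal (enn2real (wR (\<omega> 0)) / b) \<noteq> 0" using a0 b0 by simp
          then have fin: "hh t (\<omega> t) \<noteq> \<infinity>" using elim(2) phi by (auto simp: ennreal_mult_top)
          define c where "c = enn2real (hh t (\<omega> t))"
          have Yw: "Y \<omega> = c / b" unfolding Y_def c_def b_def H0_def ..
          have c0: "(\<lambda>k. h (Suc k) 0 (\<omega> 0)) \<longlonglongrightarrow> b"
          proof -
            have Hb: "H0 (\<omega> 0) = ennreal b" using G(4) unfolding b_def by (simp add: less_top)
            have "(\<lambda>k. ennreal (h (Suc k) 0 (\<omega> 0))) \<longlonglongrightarrow> ennreal b"
              using LIMSEQ_Suc[OF elim(3)] Hb by (simp add: H0_def)
            then have "(\<lambda>k. enn2real (ennreal (h (Suc k) 0 (\<omega> 0)))) \<longlonglongrightarrow> b"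
              by (rule tendsto_enn2real) (use b0 in simp)
            then show ?thesis using h_nn[OF _ T0] by simp
          qed
          have ct: "(\<lambda>k. h (Suc k) t (\<omega> t)) \<longlonglongrightarrow> c"
          proof -
            have hc: "hh t (\<omega> t) = ennreal c" using fin unfolding c_def by (simp add: less_top)
            have "(\<lambda>k. ennreal (h (Suc k) t (\<omega> t))) \<longlonglongrightarrow> ennreal c"
              using LIMSEQ_Suc[OF elim(4)] hc by simp
            then have "(\<lambda>k. enn2real (ennreal (h (Suc k) t (\<omega> t)))) \<longlonglongrightarrow> c"
              by (rule tendsto_enn2real) (simp add: c_def)
            then show ?thesis using h_nn[OF _ t] by simp
          qed
          have lim: "(\<lambda>k. 1 / r (Suc k) * (h (Suc k) t (\<omega> t) / h (Suc k) 0 (\<omega> 0))) \<longlonglongrightarrow> 1 / 1 * (c / b)"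
            by (intro tendsto_mult tendsto_divide tendsto_const rk ct c0) (use b0 in auto)
          have ev: "eventually (\<lambda>k. 0 < h (Suc k) 0 (\<omega> 0)) sequentially"
            by (rule order_tendstoD(1)[OF c0 b0])
          have "eventually (\<lambda>k. 1 / r (Suc k) * (h (Suc k) t (\<omega> t) / h (Suc k) 0 (\<omega> 0)) = Yk (Suc k) \<omega>) sequentially"
            using ev by eventually_elim (simp add: Yk_def A_def)
          from Lim_transform_eventually[OF lim this] show "(\<lambda>k. Yk (Suc k) \<omega>) \<longlonglongrightarrow> Y \<omega>"
            by (simp add: Yw)
        qed
      qed
      have "(\<lambda>n. \<integral>\<^sup>+x. ennreal (norm (Yk (Suc n) x - Y x)) \<partial>PP) \<longlonglongrightarrow> 0"
      proof (rule Scheffe_lemma1[OF _ intY AEconv])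
        show "integrable PP (Yk (Suc n))" for n by (rule intYk) simp
        have "(\<integral>\<^sup>+x. ennreal (norm (Yk (Suc n) x)) \<partial>PP) \<le> 1" for n
        proof -
          have "(\<integral>\<^sup>+x. ennreal (norm (Yk (Suc n) x)) \<partial>PP) = (\<integral>\<^sup>+x. ennreal (Yk (Suc n) x) \<partial>PP)"
            using Yk_nn[of "Suc n"] by (intro nn_integral_cong) simp
          then show ?thesis using Ik[of "Suc n"] by simp
        qed
        then have "limsup (\<lambda>n. \<integral>\<^sup>+x. ennreal (norm (Yk (Suc n) x)) \<partial>PP) \<le> 1"
          by (intro Limsup_bounded always_eventually) auto
        also have "1 = (\<integral>\<^sup>+x. ennreal (norm (Y x)) \<partial>PP)"
          using I2 Y_nn by (simp add: abs_of_nonneg)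
        finally show "limsup (\<lambda>n. \<integral>\<^sup>+x. ennreal (norm (Yk (Suc n) x)) \<partial>PP) \<le> (\<integral>\<^sup>+x. ennreal (norm (Y x)) \<partial>PP)" .
      qed
      then have "(\<lambda>n. \<integral>\<^sup>+x. ennreal (norm (Yk (Suc n) x - Y x)) \<partial>PP) \<longlonglongrightarrow> ennreal 0" by simp
      then have "(\<lambda>n. enn2real (\<integral>\<^sup>+x. ennreal (norm (Yk (Suc n) x - Y x)) \<partial>PP)) \<longlonglongrightarrow> 0"
        by (rule tendsto_enn2real) simp
      moreover have "enn2real (\<integral>\<^sup>+x. ennreal (norm (Yk (Suc n) x - Y x)) \<partial>PP) = (\<integral>x. \<bar>Yk (Suc n) x - Y x\<bar> \<partial>PP)" for n
      proof -
        have "integrable PP (\<lambda>x. \<bar>Yk (Suc n) x - Y x\<bar>)"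
          using intYk[of "Suc n"] intY by auto
        then show ?thesis by (subst nn_integral_eq_integral) auto
      qed
      ultimately have "(\<lambda>n. \<integral>x. \<bar>Yk (Suc n) x - Y x\<bar> \<partial>PP) \<longlonglongrightarrow> 0" by simp
      then show "(\<lambda>k. \<integral>\<omega>. \<bar>Yk k \<omega> - Y \<omega>\<bar> \<partial>PP) \<longlonglongrightarrow> 0"
        by (rule filterlim_sequentially_Suc[THEN iffD1])
    qed
    then show "let Y = (\<lambda>\<omega>. enn2real (hh t (\<omega> t)) / enn2real (hh 0 (\<omega> 0)));
                Yk = (\<lambda>k \<omega>. indicator (A k) (\<omega> 0) / r k * (h k t (\<omega> t) / h k 0 (\<omega> 0)))
            in integrable PP Y \<and> (\<forall>k\<ge>1. integrable PP (Yk k)) \<and>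
               (\<lambda>k. \<integral>\<omega>. \<bar>Yk k \<omega> - Y \<omega>\<bar> \<partial>PP) \<longlonglongrightarrow> 0"
      unfolding Let_def Y_def Yk_def .
  qed
qed

end
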